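(* Let $a,b\in\mathrm{Im}(\mathbb{H})$ have norm one. Then $\mathbb{H}\times\mathbb{H}_{(T_{a,\bar a}\circ\sigma_{\mathbb{H}},\,T_{b,a})}$ is isomorphic to $\mathbb{H}\times\mathbb{H}_{(T_{i,\bar i}\circ\sigma_{\mathbb{H}},\,T_{i,i})}$.
   Context: For $a,b\in\mathbb{H}$, $T_{a,b}(x)=axb$ and $\sigma_{\mathbb{H}}(x)=\bar x$. On $\mathbb{H}\times\mathbb{H}$ the Cayley–Dickson product is $(x,y)\bullet(u,v)=(xu-\bar v y,\ y\bar u+vx)$; for linear maps $f,g$ of $\mathbb{H}$, $\mathbb{H}\times\mathbb{H}_{(f,g)}$ is $\mathbb{H}\times\mathbb{H}$ with product $(x,y)\odot(u,v)=(f(x),g(y))\bullet(u,v)$. *)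

theory Defs
  imports Complex_Main
begin

datatype quat = Quat (Re: real) (Im1: real) (Im2: real) (Im3: real)

fun qadd :: "quat \<Rightarrow> quat \<Rightarrow> quat" where
  "qadd (Quat a1 b1 c1 d1) (Quat a2 b2 c2 d2) = Quat (a1+a2) (b1+b2) (c1+c2) (d1+d2)"

fun qsub :: "quat \<Rightarrow> quat \<Rightarrow> quat" where
  "qsub (Quat a1 b1 c1 d1) (Quat a2 b2 c2 d2) = Quat (a1-a2) (b1-b2) (c1-c2) (d1-d2)"

fun qscale :: "real \<Rightarrow> quat \<Rightarrow> quat" where
  "qscale r (Quat a b c d) = Quat (r*a) (r*b) (r*c) (r*d)"

fun qmul :: "quat \<Rightarrow> quat \<Rightarrow> quat" where
  "qmul (Quat a1 b1 c1 d1) (Quat a2 b2 c2 d2) =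
     Quat (a1*a2 - b1*b2 - c1*c2 - d1*d2)
          (a1*b2 + b1*a2 + c1*d2 - d1*c2)
          (a1*c2 - b1*d2 + c1*a2 + d1*b2)
          (a1*d2 + b1*c2 - c1*b2 + d1*a2)"

fun qcnj :: "quat \<Rightarrow> quat" where
  "qcnj (Quat a b c d) = Quat a (-b) (-c) (-d)"

definition qi :: quat where "qi = Quat 0 1 0 0"

definition qnorm :: "quat \<Rightarrow> real" where
  "qnorm q = sqrt ((Re q)\<^sup>2 + (Im1 q)\<^sup>2 + (Im2 q)\<^sup>2 + (Im3 q)\<^sup>2)"

definition pure_imag :: "quat \<Rightarrow> bool" where
  "pure_imag q \<longleftrightarrow> Re q = 0"

definition T :: "quat \<Rightarrow> quat \<Rightarrow> quat \<Rightarrow> quat" where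
  "T a b x = qmul (qmul a x) b"

text \<open>Cayley--Dickson product on H x H: (x,y)(u,v) = (xu - conj(v) y, y conj(u) + v x).\<close>
definition cd_mul :: "quat \<times> quat \<Rightarrow> quat \<times> quat \<Rightarrow> quat \<times> quat" where
  "cd_mul p q = (case p of (x, y) \<Rightarrow> case q of (u, v) \<Rightarrow>
      (qsub (qmul x u) (qmul (qcnj v) y), qadd (qmul y (qcnj u)) (qmul v x)))"

definition twisted_mul :: "(quat \<Rightarrow> quat) \<Rightarrow> (quat \<Rightarrow> quat) \<Rightarrow>
    quat \<times> quat \<Rightarrow> quat \<times> quat \<Rightarrow> quat \<times> quat" where
  "twisted_mul f g p q = cd_mul (f (fst p), g (snd p)) q"

definition padd :: "quat \<times> quat \<Rightarrow> quat \<times> quat \<Rightarrow> quat \<times> quat" where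
  "padd p q = (qadd (fst p) (fst q), qadd (snd p) (snd q))"

definition pscale :: "real \<Rightarrow> quat \<times> quat \<Rightarrow> quat \<times> quat" where
  "pscale r p = (qscale r (fst p), qscale r (snd p))"

definition alg_iso :: "(quat \<times> quat \<Rightarrow> quat \<times> quat \<Rightarrow> quat \<times> quat) \<Rightarrow>
    (quat \<times> quat \<Rightarrow> quat \<times> quat \<Rightarrow> quat \<times> quat) \<Rightarrow> (quat \<times> quat \<Rightarrow> quat \<times> quat) \<Rightarrow> bool" where
  "alg_iso m1 m2 \<phi> \<longleftrightarrow> bij \<phi>
     \<and> (\<forall>p q. \<phi> (padd p q) = padd (\<phi> p) (\<phi> q))
     \<and> (\<forall>r p. \<phi> (pscale r p) = pscale r (\<phi> p))
     \<and> (\<forall>p q. \<phi> (m1 p q) = m2 (\<phi> p) (\<phi> q))"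

definition alg_isomorphic where
  "alg_isomorphic m1 m2 \<longleftrightarrow> (\<exists>\<phi>. alg_iso m1 m2 \<phi>)"

end

theory Submission
  imports Defs
begin

instantiation quat :: ring_1
begin
definition "zero_quat = Quat 0 0 0 0"
definition "one_quat = Quat 1 0 0 0"
definition "plus_quat = qadd"
definition "minus_quat = qsub"
definition "uminus_quat q = Quat (- Re q) (- Im1 q) (- Im2 q) (- Im3 q)"
definition "times_quat = qmul"
instance
proof
  fix x y z :: quat
  show "x + y + z = x + (y + z)" unfolding plus_quat_def
    by (cases x; cases y; cases z) (simp add: algebra_simps)
  show "x + y = y + x" unfolding plus_quat_def
    by (cases x; cases y) (simp add: algebra_simps)
  show "0 + x = x" unfolding plus_quat_def zero_quat_def by (cases x) simp
  show "- x + x = 0" unfolding plus_quat_def zero_quat_def uminus_quat_def by (cases x) simp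
  show "x - y = x + - y" unfolding plus_quat_def minus_quat_def uminus_quat_def by (cases x; cases y) simp
  show "x * y * z = x * (y * z)" unfolding times_quat_def
    by (cases x; cases y; cases z) (simp add: algebra_simps)
  show "(x + y) * z = x * z + y * z" unfolding times_quat_def plus_quat_def
    by (cases x; cases y; cases z) (simp add: algebra_simps)
  show "x * (y + z) = x * y + x * z" unfolding times_quat_def plus_quat_def
    by (cases x; cases y; cases z) (simp add: algebra_simps)
  show "1 * x = x" unfolding times_quat_def one_quat_def by (cases x) simp
  show "x * 1 = x" unfolding times_quat_def one_quat_def by (cases x) simp
  show "(0::quat) \<noteq> 1" unfolding zero_quat_def one_quat_def by simp
qed
end

lemma cnj_mult[simp]: "qcnj (x * y) = qcnj y * qcnj x"
  unfolding times_quat_def by (cases x; cases y) (simp add: algebra_simps)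
lemma cnj_add[simp]: "qcnj (x + y) = qcnj x + qcnj y"
  unfolding plus_quat_def by (cases x; cases y) simp
lemma cnj_diff[simp]: "qcnj (x - y) = qcnj x - qcnj y"
  unfolding minus_quat_def by (cases x; cases y) simp
lemma cnj_cnj[simp]: "qcnj (qcnj x) = x" by (cases x) simp

lemma qscale_lin: "p * qscale r x * q = qscale r (p * x * q)"
  unfolding times_quat_def by (cases x; cases p; cases q) (simp add: algebra_simps)
lemma qscale_cnj: "qcnj (qscale r x) = qscale r (qcnj x)"
  by (cases x) simp

definition phi :: "quat \<Rightarrow> quat \<Rightarrow> quat \<times> quat \<Rightarrow> quat \<times> quat" where
  "phi p r z = (p * fst z * qcnj p, r * snd z * qcnj p)"

lemma key_iso:
  fixes a b p r :: quat
  assumes pa: "p * a = qi * p" and rb: "r * b = qi * r"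
    and pu: "p * qcnj p = 1" "qcnj p * p = 1"
    and ru: "r * qcnj r = 1" "qcnj r * r = 1"
  shows "alg_iso (twisted_mul (T a (qcnj a) \<circ> qcnj) (T b a))
           (twisted_mul (T qi (qcnj qi) \<circ> qcnj) (T qi qi)) (phi p r)"
proof -
  have pu': "p * (qcnj p * z) = z" "qcnj p * (p * z) = z" for z
    using pu by (metis mult.assoc mult_1_left)+
  have ru': "r * (qcnj r * z) = z" "qcnj r * (r * z) = z" for z
    using ru by (metis mult.assoc mult_1_left)+
  have H1: "qi * (p * z) = p * (a * z)" for z using pa by (metis mult.assoc)
  have H2a: "qcnj p * qi = a * qcnj p"
  proof -
    have "qcnj p * qi = qcnj p * qi * (p * qcnj p)" using pu by simp
    also have "\<dots> = qcnj p * (qi * p) * qcnj p" by (simp add: mult.assoc)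
    also have "\<dots> = a * qcnj p" using pa pu' by (metis mult.assoc)
    finally show ?thesis .
  qed
  have H2: "qcnj p * (qi * z) = a * (qcnj p * z)" for z using H2a by (metis mult.assoc)
  have H4a: "qcnj p * qcnj qi = qcnj a * qcnj p" using arg_cong[OF pa, of qcnj] by simp
  have H4: "qcnj p * (qcnj qi * z) = qcnj a * (qcnj p * z)" for z using H4a by (metis mult.assoc)
  have H3a: "qcnj qi * p = p * qcnj a" using arg_cong[OF H2a, of qcnj] by simp
  have H3: "qcnj qi * (p * z) = p * (qcnj a * z)" for z using H3a by (metis mult.assoc)
  have R1: "qi * (r * z) = r * (b * z)" for z using rb by (metis mult.assoc)
  have R2a: "qcnj r * qi = b * qcnj r"
  proof -
    have "qcnj r * qi = qcnj r * qi * (r * qcnj r)" using ru by simp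
    also have "\<dots> = qcnj r * (qi * r) * qcnj r" by (simp add: mult.assoc)
    also have "\<dots> = b * qcnj r" using rb ru' by (metis mult.assoc)
    finally show ?thesis .
  qed
  have R2: "qcnj r * (qi * z) = b * (qcnj r * z)" for z using R2a by (metis mult.assoc)
  define psi where "psi z = (qcnj p * fst z * p, qcnj r * snd z * p)" for z
  have "psi \<circ> phi p r = id" "phi p r \<circ> psi = id"
    by (auto simp: psi_def phi_def fun_eq_iff mult.assoc pu' ru' pu ru)
  hence bij: "bij (phi p r)" using o_bij by blast
  show ?thesis
    unfolding alg_iso_def
  proof (intro conjI allI bij)
    fix z w
    show "phi p r (padd z w) = padd (phi p r z) (phi p r w)"
      by (simp add: phi_def padd_def plus_quat_def[symmetric] ring_distribs)
  next
    fix s z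
    show "phi p r (pscale s z) = pscale s (phi p r z)"
      by (simp add: phi_def pscale_def qscale_lin)
  next
    fix z w
    show "phi p r (twisted_mul (T a (qcnj a) \<circ> qcnj) (T b a) z w) =
      twisted_mul (T qi (qcnj qi) \<circ> qcnj) (T qi qi) (phi p r z) (phi p r w)"
      by (cases z; cases w)
        (simp add: phi_def twisted_mul_def cd_mul_def T_def times_quat_def[symmetric]
          plus_quat_def[symmetric] minus_quat_def[symmetric] ring_distribs mult.assoc
          pu' ru' H1 H2 H2a H3 H3a H4 H4a R1 R2 R2a)
  qed
qed

lemma exists_rot:
  fixes a :: quat
  assumes "pure_imag a" "qnorm a = 1"
  shows "\<exists>p. p * a = qi * p \<and> p * qcnj p = 1 \<and> qcnj p * p = 1"
proof -
  obtain a0 a1 a2 a3 where A: "a = Quat a0 a1 a2 a3" by (cases a)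
  have a0: "a0 = 0" using assms(1) A by (simp add: pure_imag_def)
  have n: "a1^2 + a2^2 + a3^2 = 1" using assms(2) A a0 by (simp add: qnorm_def)
  show ?thesis
  proof (cases "a1 = -1")
    case True
    hence "a2^2 + a3^2 = 0" using n by simp
    hence "a2 = 0" "a3 = 0" by (simp_all add: sum_power2_eq_zero_iff)
    thus ?thesis using True A a0
      by (intro exI[of _ "Quat 0 0 1 0"]) (simp add: times_quat_def qi_def one_quat_def)
  next
    case False
    have "a1^2 \<le> 1" using n zero_le_power2[of a2] zero_le_power2[of a3] by linarith
    hence "\<bar>a1\<bar> \<le> 1" by (simp add: abs_square_le_1)
    hence a1: "a1 \<ge> -1" by simp
    with False have pos: "2 + 2*a1 > 0" by simp
    define s where "s = sqrt (2 + 2*a1)"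
    have s2: "s * s = 2 + 2*a1" using pos by (simp add: s_def)
    have sp: "s > 0" using pos by (simp add: s_def)
    define p0 where "p0 = Quat 0 (a1+1) a2 a3"
    define p where "p = qscale (1/s) p0"
    have e0: "p0 * a = qi * p0"
      unfolding p0_def A a0 times_quat_def qi_def
      using n by (simp add: power2_eq_square algebra_simps; linarith)
    have sc: "qscale t x * y = qscale t (x * y)" "x * qscale t y = qscale t (x * y)" for t x y
      unfolding times_quat_def by (cases x; cases y; simp add: algebra_simps)+
    have E: "p * a = qi * p" unfolding p_def sc e0 ..
    have N: "p0 * qcnj p0 = Quat (s*s) 0 0 0" "qcnj p0 * p0 = Quat (s*s) 0 0 0"
      unfolding p0_def times_quat_def s2 using n
      by (simp_all add: power2_eq_square algebra_simps)
    have C: "qcnj p = qscale (1/s) (qcnj p0)" unfolding p_def qscale_cnj ..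
    have Q: "qscale (1/s) (qscale (1/s) (Quat (s*s) 0 0 0)) = 1"
      using sp by (simp add: one_quat_def)
    have "p * qcnj p = 1" "qcnj p * p = 1"
      unfolding C unfolding p_def sc N Q by (rule refl)+
    thus ?thesis using E by blast
  qed
qed

theorem corollary6:
  fixes a b :: quat
  assumes "pure_imag a" and "pure_imag b"
    and "qnorm a = 1" and "qnorm b = 1"
  shows "alg_isomorphic
           (twisted_mul (T a (qcnj a) \<circ> qcnj) (T b a))
           (twisted_mul (T qi (qcnj qi) \<circ> qcnj) (T qi qi))"
proof -
  obtain p where p: "p * a = qi * p" "p * qcnj p = 1" "qcnj p * p = 1"
    using exists_rot assms by blast
  obtain r where r: "r * b = qi * r" "r * qcnj r = 1" "qcnj r * r = 1"
    using exists_rot assms by blast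
  show ?thesis unfolding alg_isomorphic_def using key_iso[OF p(1) r(1) p(2,3) r(2,3)] by blast
qed

end
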